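(* Let $N = \{1,\dots,n\}$ with $n \geq 2$, and for each $i \in N$ let $\pi_i : 2^{N \setminus\{i\}} \to \mathbb{R}_{\geq 0}$. For any directed graph $G = (N,A)$ (possibly cyclic) put $\pi^*(G) = \prod_{i} \pi_i(A_i)$ with $A_i = \{j : ji \in A\}$, and let $\pi(G) = \pi^*(G)$ if $G$ is acyclic and $\pi(G) = 0$ otherwise. Let $(q_{ij})$ be a probability distribution over ordered pairs $(i,j)$ of distinct nodes. For a DAG $G$ and ordered pair $ij$, let $G^{ij}$ be obtained from $G$ by removing arc $ij$ if $ij \in A$, by reversing arc $ji$ into $ij$ if $ji \in A$, and by adding arc $ij$ otherwise. For a DAG $G$ with $\pi(G) > 0$ define $b_{ij} = q_{ij}\min\{1, \pi^*(G^{ij})/\pi(G)\}$ and $b = \sum_{ij} b_{ij}$, and define a Markov chain on $\Omega = \{G \text{ DAG on } N : \pi(G) > 0\}$ as follows: from state $G$, with probability $1-b$ stay at $G$; with probability $b$, draw a pair $ij$ with probability $b_{ij}/b$ and move to $G^{ij}$ if $G^{ij}$ is acyclic, otherwise stay at $G$. Assume: (1) $\pi(G) > 0$ for every DAG $G$ with exactly one arc; (2) every DAG $G$ with $\pi(G) > 0$ and at least one arc has an arc whose removal yields a DAG $G'$ with $\pi(G') > 0$; (3) $q_{ij} > 0$ for all ordered pairs $ij$; (4) $q_{ij} = q_{ji}$ for all pairs. Then the chain is irreducible and aperiodic on $\Omega$, and the distribution $\pi(G)/Z$ with $Z = \sum_{G} \pi(G)$ (sum over all DAGs on $N$) is a stationary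 distribution satisfying detailed balance; consequently the chain converges to $\pi/Z$ from any initial state in $\Omega$.
   Context: A DAG is a directed acyclic graph; directed graphs here have no self-loops and at most one arc per ordered pair. Note that $b \leq \sum_{ij} q_{ij} = 1$, so the transition rule is well defined. *)

theory Defs
  imports Complex_Main
begin

definition Nodes :: "nat \<Rightarrow> nat set" where
  "Nodes n = {1..n}"

definition Pairs :: "nat \<Rightarrow> (nat \<times> nat) set" where
  "Pairs n = {(i,j). i \<in> Nodes n \<and> j \<in> Nodes n \<and> i \<noteq> j}"

definition parents :: "(nat \<times> nat) set \<Rightarrow> nat \<Rightarrow> nat set" where
  "parents A i = {j. (j,i) \<in> A}"

definition pistar :: "nat \<Rightarrow> (nat \<Rightarrow> nat set \<Rightarrow> real) \<Rightarrow> (nat \<times> nat) set \<Rightarrow> real" where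
  "pistar n pr A = (\<Prod>i\<in>Nodes n. pr i (parents A i))"

definition piG :: "nat \<Rightarrow> (nat \<Rightarrow> nat set \<Rightarrow> real) \<Rightarrow> (nat \<times> nat) set \<Rightarrow> real" where
  "piG n pr A = (if acyclic A then pistar n pr A else 0)"

definition DAGs :: "nat \<Rightarrow> (nat \<times> nat) set set" where
  "DAGs n = {A. A \<subseteq> Pairs n \<and> acyclic A}"

definition Omega :: "nat \<Rightarrow> (nat \<Rightarrow> nat set \<Rightarrow> real) \<Rightarrow> (nat \<times> nat) set set" where
  "Omega n pr = {A \<in> DAGs n. piG n pr A > 0}"

definition Zconst :: "nat \<Rightarrow> (nat \<Rightarrow> nat set \<Rightarrow> real) \<Rightarrow> real" where
  "Zconst n pr = (\<Sum>A\<in>DAGs n. piG n pr A)"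

definition flip :: "(nat \<times> nat) set \<Rightarrow> nat \<times> nat \<Rightarrow> (nat \<times> nat) set" where
  "flip A p = (case p of (i,j) \<Rightarrow>
     if (i,j) \<in> A then A - {(i,j)}
     else if (j,i) \<in> A then insert (i,j) (A - {(j,i)})
     else insert (i,j) A)"

definition bij :: "nat \<Rightarrow> (nat \<Rightarrow> nat set \<Rightarrow> real) \<Rightarrow> (nat \<Rightarrow> nat \<Rightarrow> real)
                   \<Rightarrow> (nat \<times> nat) set \<Rightarrow> nat \<times> nat \<Rightarrow> real" where
  "bij n pr q G p = (case p of (i,j) \<Rightarrow>
      q i j * min 1 (pistar n pr (flip G (i,j)) / piG n pr G))"

text \<open>One-step transition probability from state G to state H: with probability
  b_{ij} the pair ij is drawn (i.e. b * b_{ij}/b), and the chain moves to G^{ij} if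
  it is acyclic; otherwise (and with probability 1 - b) it stays at G.\<close>
definition Ptrans :: "nat \<Rightarrow> (nat \<Rightarrow> nat set \<Rightarrow> real) \<Rightarrow> (nat \<Rightarrow> nat \<Rightarrow> real)
                   \<Rightarrow> (nat \<times> nat) set \<Rightarrow> (nat \<times> nat) set \<Rightarrow> real" where
  "Ptrans n pr q G H =
     (\<Sum>p\<in>Pairs n. if flip G p = H \<and> acyclic (flip G p) then bij n pr q G p else 0)
     + (if H = G then
          (1 - (\<Sum>p\<in>Pairs n. bij n pr q G p))
          + (\<Sum>p\<in>Pairs n. if \<not> acyclic (flip G p) then bij n pr q G p else 0)
        else 0)"

fun Pn :: "nat \<Rightarrow> (nat \<Rightarrow> nat set \<Rightarrow> real) \<Rightarrow> (nat \<Rightarrow> nat \<Rightarrow> real) \<Rightarrow> nat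
             \<Rightarrow> (nat \<times> nat) set \<Rightarrow> (nat \<times> nat) set \<Rightarrow> real" where
  "Pn n pr q 0 G H = (if G = H then 1 else 0)"
| "Pn n pr q (Suc t) G H = (\<Sum>K\<in>Omega n pr. Pn n pr q t G K * Ptrans n pr q K H)"

definition irreducible_chain :: "nat \<Rightarrow> (nat \<Rightarrow> nat set \<Rightarrow> real) \<Rightarrow> (nat \<Rightarrow> nat \<Rightarrow> real) \<Rightarrow> bool" where
  "irreducible_chain n pr q \<longleftrightarrow>
     (\<forall>G\<in>Omega n pr. \<forall>H\<in>Omega n pr. \<exists>t. Pn n pr q t G H > 0)"

definition aperiodic_chain :: "nat \<Rightarrow> (nat \<Rightarrow> nat set \<Rightarrow> real) \<Rightarrow> (nat \<Rightarrow> nat \<Rightarrow> real) \<Rightarrow> bool" where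
  "aperiodic_chain n pr q \<longleftrightarrow>
     (\<forall>G\<in>Omega n pr. Gcd {t. t > 0 \<and> Pn n pr q t G G > 0} = 1)"

definition is_distribution :: "nat \<Rightarrow> (nat \<Rightarrow> nat set \<Rightarrow> real) \<Rightarrow> ((nat \<times> nat) set \<Rightarrow> real) \<Rightarrow> bool" where
  "is_distribution n pr mu \<longleftrightarrow>
     (\<forall>G\<in>Omega n pr. mu G \<ge> 0) \<and> (\<Sum>G\<in>Omega n pr. mu G) = 1"

definition stationary :: "nat \<Rightarrow> (nat \<Rightarrow> nat set \<Rightarrow> real) \<Rightarrow> (nat \<Rightarrow> nat \<Rightarrow> real)
                          \<Rightarrow> ((nat \<times> nat) set \<Rightarrow> real) \<Rightarrow> bool" where
  "stationary n pr q mu \<longleftrightarrow>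
     is_distribution n pr mu \<and>
     (\<forall>H\<in>Omega n pr. (\<Sum>G\<in>Omega n pr. mu G * Ptrans n pr q G H) = mu H)"

definition detailed_balance :: "nat \<Rightarrow> (nat \<Rightarrow> nat set \<Rightarrow> real) \<Rightarrow> (nat \<Rightarrow> nat \<Rightarrow> real)
                          \<Rightarrow> ((nat \<times> nat) set \<Rightarrow> real) \<Rightarrow> bool" where
  "detailed_balance n pr q mu \<longleftrightarrow>
     (\<forall>G\<in>Omega n pr. \<forall>H\<in>Omega n pr. mu G * Ptrans n pr q G H = mu H * Ptrans n pr q H G)"

end

theory Submission
  imports Defs
begin


lemma acyc_asym: "acyclic G \<Longrightarrow> (i,j) \<in> G \<Longrightarrow> (j,i) \<notin> G"
  unfolding acyclic_def by (meson r_into_trancl trancl_into_trancl)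

lemma finite_Pairs: "finite (Pairs n)"
proof -
  have "Pairs n \<subseteq> Nodes n \<times> Nodes n" by (auto simp: Pairs_def)
  then show ?thesis by (rule finite_subset) (simp add: Nodes_def)
qed

lemma flip_ne: "flip A p \<noteq> A"
  by (cases p) (auto simp: flip_def)

lemma flip_Pairs: "A \<subseteq> Pairs n \<Longrightarrow> p \<in> Pairs n \<Longrightarrow> flip A p \<subseteq> Pairs n"
  by (cases p) (auto simp: flip_def Pairs_def)

lemma flip_inj: "p \<in> Pairs n \<Longrightarrow> p' \<in> Pairs n \<Longrightarrow> flip A p = flip A p' \<Longrightarrow> p = p'"
  apply (cases p; cases p')
  apply (auto simp: flip_def Pairs_def split: if_splits)
  done

lemma flip_back:
  assumes "acyclic G" "p \<in> Pairs n"
  shows "\<exists>p'\<in>Pairs n. flip (flip G p) p' = G \<and> (p' = p \<or> p' = prod.swap p)"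
proof -
  obtain i j where p: "p = (i,j)" by (cases p)
  with assms have ij: "i \<noteq> j" "(j,i) \<in> Pairs n" by (auto simp: Pairs_def)
  show ?thesis
  proof (cases "(i,j) \<in> G")
    case True
    with acyc_asym[OF assms(1)] have "(j,i) \<notin> G" by blast
    with True show ?thesis using p assms(2) by (intro bexI[of _ p]) (auto simp: flip_def)
  next
    case F: False
    show ?thesis
    proof (cases "(j,i) \<in> G")
      case True
      with F ij show ?thesis using p by (intro bexI[of _ "(j,i)"]) (auto simp: flip_def)
    next
      case False
      with F ij show ?thesis using p assms(2) by (intro bexI[of _ p]) (auto simp: flip_def)
    qed
  qed
qed




locale dagchain =
  fixes n :: nat and pr :: "nat \<Rightarrow> nat set \<Rightarrow> real" and q :: "nat \<Rightarrow> nat \<Rightarrow> real"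
  assumes n2: "n \<ge> 2"
    and pi_nonneg: "\<And>i S. i \<in> Nodes n \<Longrightarrow> S \<subseteq> Nodes n - {i} \<Longrightarrow> pr i S \<ge> 0"
    and q_distr: "(\<Sum>(i,j)\<in>Pairs n. q i j) = 1"
    and A1: "\<And>i j. (i,j) \<in> Pairs n \<Longrightarrow> piG n pr {(i,j)} > 0"
    and A2: "\<And>A. A \<in> DAGs n \<Longrightarrow> piG n pr A > 0 \<Longrightarrow> A \<noteq> {} \<Longrightarrow>
               \<exists>e\<in>A. piG n pr (A - {e}) > 0"
    and A3: "\<And>i j. (i,j) \<in> Pairs n \<Longrightarrow> q i j > 0"
    and A4: "\<And>i j. (i,j) \<in> Pairs n \<Longrightarrow> q i j = q j i"
begin

abbreviation "\<Omega> \<equiv> Omega n pr"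
abbreviation "P \<equiv> Ptrans n pr q"
abbreviation "b \<equiv> Defs.bij n pr q"
abbreviation "piA \<equiv> piG n pr"

lemma Omega_sub: "\<Omega> \<subseteq> DAGs n" by (auto simp: Omega_def)

lemma Omega_D: "G \<in> \<Omega> \<Longrightarrow> G \<subseteq> Pairs n \<and> acyclic G \<and> piA G > 0"
  by (auto simp: Omega_def DAGs_def)

lemma Omega_I: "G \<subseteq> Pairs n \<Longrightarrow> piA G > 0 \<Longrightarrow> G \<in> \<Omega>"
  by (auto simp: Omega_def DAGs_def piG_def split: if_splits)

lemma finite_DAGs: "finite (DAGs n)"
proof -
  have "DAGs n \<subseteq> Pow (Pairs n)" by (auto simp: DAGs_def)
  then show ?thesis using finite_Pairs by (meson finite_Pow_iff finite_subset)
qed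

lemma finite_Omega: "finite \<Omega>"
  using finite_DAGs Omega_sub finite_subset by blast

lemma pistar_nonneg: "A \<subseteq> Pairs n \<Longrightarrow> pistar n pr A \<ge> 0"
  unfolding pistar_def
  by (rule prod_nonneg) (auto intro!: pi_nonneg simp: parents_def Pairs_def)

lemma piG_nonneg: "A \<subseteq> Pairs n \<Longrightarrow> piA A \<ge> 0"
  using pistar_nonneg by (simp add: piG_def)

lemma acyc_pistar: "acyclic A \<Longrightarrow> pistar n pr A = piA A"
  by (simp add: piG_def)

lemma b_bounds:
  assumes G: "G \<in> \<Omega>" and p: "p \<in> Pairs n"
  shows "0 \<le> b G p" "b G p \<le> q (fst p) (snd p)"
proof -
  obtain i j where pe: "p = (i,j)" by (cases p)
  have q: "q i j > 0" using A3 p pe by auto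
  have s: "pistar n pr (flip G (i,j)) \<ge> 0"
    using pistar_nonneg[OF flip_Pairs[OF conjunct1[OF Omega_D[OF G]] p]] pe by simp
  have g: "piA G > 0" using Omega_D[OF G] by blast
  define x where "x = min 1 (pistar n pr (flip G (i,j)) / piA G)"
  have x0: "0 \<le> x" unfolding x_def using s g by simp
  have x1: "x \<le> 1" unfolding x_def by simp
  have be: "b G p = q i j * x" unfolding x_def pe bij_def by simp
  show "0 \<le> b G p" unfolding be using q x0 by simp
  have "q i j * x \<le> q i j" using q x1 x0 by (simp add: mult_left_le)
  then show "b G p \<le> q (fst p) (snd p)" using be pe by simp
qed

lemma sum_b_le1: "G \<in> \<Omega> \<Longrightarrow> (\<Sum>p\<in>Pairs n. b G p) \<le> 1"
proof -
  assume G: "G \<in> \<Omega>"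
  have "(\<Sum>p\<in>Pairs n. b G p) \<le> (\<Sum>p\<in>Pairs n. q (fst p) (snd p))"
    by (rule sum_mono) (rule b_bounds(2)[OF G])
  also have "\<dots> = 1" using q_distr by (simp add: case_prod_beta')
  finally show ?thesis .
qed

lemma P_nonneg: "G \<in> \<Omega> \<Longrightarrow> P G H \<ge> 0"
proof -
  assume G: "G \<in> \<Omega>"
  have a: "(\<Sum>p\<in>Pairs n. if flip G p = H \<and> acyclic (flip G p) then b G p else 0) \<ge> 0"
    by (rule sum_nonneg) (simp add: b_bounds(1)[OF G])
  have c: "(\<Sum>p\<in>Pairs n. if \<not> acyclic (flip G p) then b G p else 0) \<ge> 0"
    by (rule sum_nonneg) (simp add: b_bounds(1)[OF G])
  have d: "1 - (\<Sum>p\<in>Pairs n. b G p) \<ge> 0" using sum_b_le1[OF G] by simp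
  show ?thesis unfolding Ptrans_def using a c d by simp
qed

lemma b_zero: "G \<in> \<Omega> \<Longrightarrow> p \<in> Pairs n \<Longrightarrow> acyclic (flip G p) \<Longrightarrow> flip G p \<notin> \<Omega> \<Longrightarrow> b G p = 0"
proof -
  assume G: "G \<in> \<Omega>" and p: "p \<in> Pairs n" and ac: "acyclic (flip G p)" and no: "flip G p \<notin> \<Omega>"
  have sub: "flip G p \<subseteq> Pairs n" using flip_Pairs Omega_D[OF G] p by blast
  have "piA (flip G p) = 0" using no sub piG_nonneg[OF sub] Omega_I[OF sub] by force
  then have "pistar n pr (flip G p) = 0" using ac by (simp add: piG_def)
  then show ?thesis by (cases p) (simp add: bij_def)
qed

lemma b_pos: "G \<in> \<Omega> \<Longrightarrow> p \<in> Pairs n \<Longrightarrow> flip G p \<in> \<Omega> \<Longrightarrow> b G p > 0"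
proof -
  assume G: "G \<in> \<Omega>" and p: "p \<in> Pairs n" and H: "flip G p \<in> \<Omega>"
  obtain i j where pe: "p = (i,j)" by (cases p)
  have "pistar n pr (flip G p) > 0" using Omega_D[OF H] acyc_pistar by auto
  moreover have "piA G > 0" using Omega_D[OF G] by blast
  ultimately have "min 1 (pistar n pr (flip G (i,j)) / piA G) > 0" using pe by auto
  moreover have "q i j > 0" using A3 p pe by auto
  ultimately show ?thesis using pe by (simp add: bij_def)
qed

lemma P_rowsum: assumes G: "G \<in> \<Omega>" shows "(\<Sum>H\<in>\<Omega>. P G H) = 1"
proof -
  let ?c = "\<lambda>p. acyclic (flip G p)"
  have 1: "(\<Sum>H\<in>\<Omega>. (\<Sum>p\<in>Pairs n. if flip G p = H \<and> ?c p then b G p else 0))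
        = (\<Sum>p\<in>Pairs n. if flip G p \<in> \<Omega> \<and> ?c p then b G p else 0)"
  proof -
    have e: "(\<Sum>H\<in>\<Omega>. if flip G p = H \<and> ?c p then b G p else 0) = (if flip G p \<in> \<Omega> \<and> ?c p then b G p else 0)" for p
      by (cases "?c p") (simp_all add: sum.delta sum.delta' finite_Omega)
    show ?thesis by (subst sum.swap) (simp only: e)
  qed
  have 2: "(\<Sum>H\<in>\<Omega>. (if H = G then X else 0)) = X" for X :: real
    using G finite_Omega by (simp add: sum.delta)
  have 3: "(\<Sum>p\<in>Pairs n. b G p) = (\<Sum>p\<in>Pairs n. if flip G p \<in> \<Omega> \<and> ?c p then b G p else 0)
            + (\<Sum>p\<in>Pairs n. if \<not> ?c p then b G p else 0)"
    unfolding sum.distrib[symmetric]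
    by (rule sum.cong[OF refl]) (use b_zero[OF G] in auto)
  show ?thesis unfolding Ptrans_def sum.distrib 1 2 3 by simp
qed

lemma P_flip_pos: assumes G: "G \<in> \<Omega>" and p: "p \<in> Pairs n" and H: "flip G p \<in> \<Omega>"
  shows "P G (flip G p) > 0"
proof -
  have ac: "acyclic (flip G p)" using Omega_D[OF H] by blast
  have "0 < b G p" by (rule b_pos[OF G p H])
  also have "\<dots> \<le> (\<Sum>p'\<in>Pairs n. if flip G p' = flip G p \<and> acyclic (flip G p') then b G p' else 0)"
    using member_le_sum[of p "Pairs n" "\<lambda>p'. if flip G p' = flip G p \<and> acyclic (flip G p') then b G p' else 0"]
       p ac finite_Pairs b_bounds(1)[OF G] by auto
  also have "\<dots> = P G (flip G p)" unfolding Ptrans_def using flip_ne by simp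
  finally show ?thesis .
qed

end



context dagchain begin

lemma P_single: assumes G: "G \<in> \<Omega>" and H: "H \<in> \<Omega>" and p: "p \<in> Pairs n" and f: "flip G p = H"
  shows "P G H = b G p"
proof -
  have ne: "H \<noteq> G" using f flip_ne by blast
  have acH: "acyclic H" using Omega_D[OF H] by blast
  have "(\<Sum>p'\<in>Pairs n. if flip G p' = H \<and> acyclic (flip G p') then b G p' else 0)
      = (\<Sum>p'\<in>Pairs n. if p' = p then b G p' else 0)"
  proof (rule sum.cong[OF refl])
    fix p' assume p': "p' \<in> Pairs n"
    have "flip G p' = H \<longleftrightarrow> p' = p" using flip_inj[OF p' p] f by auto
    then show "(if flip G p' = H \<and> acyclic (flip G p') then b G p' else 0) = (if p' = p then b G p' else 0)"
      using acH f by auto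
  qed
  also have "\<dots> = b G p" using p finite_Pairs by (simp add: sum.delta)
  finally show ?thesis unfolding Ptrans_def using ne by simp
qed

lemma P_zero: assumes H: "H \<in> \<Omega>" and ne: "H \<noteq> G" and no: "\<not> (\<exists>p\<in>Pairs n. flip G p = H)"
  shows "P G H = 0"
  unfolding Ptrans_def using ne no by (auto intro!: sum.neutral)

lemma bmin: assumes G: "G \<in> \<Omega>" and H: "H \<in> \<Omega>" and f: "flip G (i,j) = H"
  shows "piA G * b G (i,j) = q i j * min (piA G) (piA H)"
proof -
  have g: "piA G > 0" using Omega_D[OF G] by blast
  have h: "pistar n pr H = piA H" using Omega_D[OF H] acyc_pistar by blast
  have "piA G * min 1 (piA H / piA G) = min (piA G) (piA H)"
    using g by (auto simp: min_def field_simps)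
  then show ?thesis unfolding bij_def using f h by (simp add: algebra_simps)
qed

lemma DB: assumes G: "G \<in> \<Omega>" and H: "H \<in> \<Omega>"
  shows "piA G * P G H = piA H * P H G"
proof (cases "G = H")
  case True then show ?thesis by simp
next
  case ne: False
  have acG: "acyclic G" and acH: "acyclic H" using Omega_D[OF G] Omega_D[OF H] by auto
  show ?thesis
  proof (cases "\<exists>p\<in>Pairs n. flip G p = H")
    case True
    then obtain p where p: "p \<in> Pairs n" and f: "flip G p = H" by blast
    obtain p' where p': "p' \<in> Pairs n" and f': "flip H p' = G" and pp: "p' = p \<or> p' = prod.swap p"
      using flip_back[OF acG p] f by blast
    obtain i j where pe: "p = (i,j)" by (cases p)
    have qq: "q (fst p') (snd p') = q i j" using pp pe A4[OF p[unfolded pe]] by auto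
    have "piA G * P G H = q i j * min (piA G) (piA H)"
      using P_single[OF G H p f] bmin[OF G H] f pe by simp
    also have "\<dots> = piA H * P H G"
      using P_single[OF H G p' f'] bmin[OF H G, of "fst p'" "snd p'"] f' qq
      by (simp add: min.commute)
    finally show ?thesis .
  next
    case False
    have "\<not> (\<exists>p\<in>Pairs n. flip H p = G)"
    proof
      assume "\<exists>p\<in>Pairs n. flip H p = G"
      then obtain p where p: "p \<in> Pairs n" and f: "flip H p = G" by blast
      from flip_back[OF acH p] f False show False by blast
    qed
    then show ?thesis using P_zero[OF H ne[symmetric] False] P_zero[OF G ne] by simp
  qed
qed

lemma empty_Omega: "{} \<in> \<Omega>"
proof -
  have p: "(1,2) \<in> Pairs n" using n2 by (auto simp: Pairs_def Nodes_def)
  have "{(1::nat,2::nat)} \<in> DAGs n" using A1[OF p] p by (auto simp: DAGs_def piG_def split: if_splits)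
  from A2[OF this A1[OF p]] have "piA {} > 0" by auto
  then show ?thesis by (rule Omega_I[rotated]) simp
qed

lemma Z_eq: "Zconst n pr = (\<Sum>G\<in>\<Omega>. piA G)"
proof -
  have z: "\<forall>G\<in>DAGs n - \<Omega>. piA G = 0"
  proof
    fix G assume G: "G \<in> DAGs n - \<Omega>"
    then have s: "G \<subseteq> Pairs n" by (auto simp: DAGs_def)
    show "piA G = 0" using piG_nonneg[OF s] Omega_I[OF s] G by force
  qed
  show ?thesis unfolding Zconst_def using sum.mono_neutral_left[OF finite_DAGs Omega_sub z] by simp
qed

lemma Z_pos: "Zconst n pr > 0"
proof -
  have "0 < piA {}" using Omega_D[OF empty_Omega] by blast
  also have "\<dots> \<le> (\<Sum>G\<in>\<Omega>. piA G)"
    using member_le_sum[OF empty_Omega, of piA] finite_Omega Omega_D by force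
  finally show ?thesis using Z_eq by simp
qed

abbreviation "mu \<equiv> (\<lambda>G. piG n pr G / Zconst n pr)"

lemma DB_mu: "detailed_balance n pr q mu"
  unfolding detailed_balance_def
proof (intro ballI)
  fix G H assume G: "G \<in> \<Omega>" and H: "H \<in> \<Omega>"
  show "mu G * P G H = mu H * P H G" using DB[OF G H] by (simp add: field_simps)
qed

lemma mu_dist: "is_distribution n pr mu"
  unfolding is_distribution_def
proof
  show "\<forall>G\<in>\<Omega>. 0 \<le> mu G" using Z_pos Omega_D by (auto intro!: divide_nonneg_pos less_imp_le)
  show "(\<Sum>G\<in>\<Omega>. mu G) = 1" using Z_pos Z_eq by (simp add: sum_divide_distrib[symmetric])
qed

lemma mu_stat: assumes H: "H \<in> \<Omega>" shows "(\<Sum>G\<in>\<Omega>. mu G * P G H) = mu H"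
proof -
  have "(\<Sum>G\<in>\<Omega>. mu G * P G H) = (\<Sum>G\<in>\<Omega>. mu H * P H G)"
    using DB_mu H unfolding detailed_balance_def by (intro sum.cong) auto
  also have "\<dots> = mu H * (\<Sum>G\<in>\<Omega>. P H G)" by (rule sum_distrib_left[symmetric])
  also have "\<dots> = mu H" using P_rowsum[OF H] by simp
  finally show ?thesis .
qed

lemma stat: "stationary n pr q mu"
  unfolding stationary_def using mu_dist mu_stat by blast

end



context dagchain begin

abbreviation "Q \<equiv> Pn n pr q"

lemma Pn_nonneg: "Q t G H \<ge> 0"
proof (induction t arbitrary: H)
  case 0 then show ?case by simp
next
  case (Suc t)
  show ?case by (simp, rule sum_nonneg) (use Suc P_nonneg in auto)
qed

lemma Pn_1: assumes G: "G \<in> \<Omega>" shows "Q 1 G H = P G H"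
proof -
  have "Q 1 G H = (\<Sum>K\<in>\<Omega>. (if G = K then 1 else 0) * P K H)" by simp
  also have "\<dots> = (\<Sum>K\<in>\<Omega>. if G = K then P K H else 0)" by (intro sum.cong) auto
  also have "\<dots> = P G H" using G finite_Omega by (simp add: sum.delta)
  finally show ?thesis .
qed

lemma CK: "H \<in> \<Omega> \<Longrightarrow> Q (t + s) G H = (\<Sum>K\<in>\<Omega>. Q t G K * Q s K H)"
proof (induction s arbitrary: H)
  case 0 then show ?case using finite_Omega by (simp add: if_distrib sum.delta' cong: if_cong)
next
  case (Suc s)
  have "Q (t + Suc s) G H = (\<Sum>K\<in>\<Omega>. Q (t+s) G K * P K H)" by simp
  also have "\<dots> = (\<Sum>K\<in>\<Omega>. (\<Sum>K'\<in>\<Omega>. Q t G K' * Q s K' K) * P K H)"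
    using Suc.IH by (intro sum.cong) auto
  also have "\<dots> = (\<Sum>K\<in>\<Omega>. \<Sum>K'\<in>\<Omega>. Q t G K' * (Q s K' K * P K H))"
    by (simp add: sum_distrib_right mult.assoc)
  also have "\<dots> = (\<Sum>K'\<in>\<Omega>. \<Sum>K\<in>\<Omega>. Q t G K' * (Q s K' K * P K H))"
    by (rule sum.swap)
  also have "\<dots> = (\<Sum>K'\<in>\<Omega>. Q t G K' * Q (Suc s) K' H)"
    by (simp add: sum_distrib_left)
  finally show ?case .
qed

lemma Pn_rowsum: "G \<in> \<Omega> \<Longrightarrow> (\<Sum>H\<in>\<Omega>. Q t G H) = 1"
proof (induction t)
  case 0 then show ?case using finite_Omega by (simp add: sum.delta)
next
  case (Suc t)
  have "(\<Sum>H\<in>\<Omega>. Q (Suc t) G H) = (\<Sum>H\<in>\<Omega>. \<Sum>K\<in>\<Omega>. Q t G K * P K H)" by simp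
  also have "\<dots> = (\<Sum>K\<in>\<Omega>. \<Sum>H\<in>\<Omega>. Q t G K * P K H)" by (rule sum.swap)
  also have "\<dots> = (\<Sum>K\<in>\<Omega>. Q t G K * (\<Sum>H\<in>\<Omega>. P K H))" by (simp add: sum_distrib_left)
  also have "\<dots> = (\<Sum>K\<in>\<Omega>. Q t G K)" using P_rowsum by simp
  finally show ?case using Suc by simp
qed

lemma Pn_le1: "G \<in> \<Omega> \<Longrightarrow> H \<in> \<Omega> \<Longrightarrow> Q t G H \<le> 1"
  using member_le_sum[of H \<Omega> "Q t G"] Pn_nonneg finite_Omega Pn_rowsum by force

lemma pos_comp: assumes K: "K \<in> \<Omega>" and H: "H \<in> \<Omega>" and a: "Q c G K > 0" and d: "Q d K H > 0"
  shows "Q (c + d) G H > 0"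
proof -
  have "0 < Q c G K * Q d K H" using a d by simp
  also have "\<dots> \<le> (\<Sum>K'\<in>\<Omega>. Q c G K' * Q d K' H)"
    using member_le_sum[OF K, of "\<lambda>K'. Q c G K' * Q d K' H"] finite_Omega Pn_nonneg by force
  finally show ?thesis using CK[OF H] by simp
qed

lemma step_pos: "G \<in> \<Omega> \<Longrightarrow> p \<in> Pairs n \<Longrightarrow> flip G p \<in> \<Omega> \<Longrightarrow> Q 1 G (flip G p) > 0"
  using Pn_1 P_flip_pos by simp

lemma finite_G: "G \<in> \<Omega> \<Longrightarrow> finite G"
  using Omega_D finite_Pairs finite_subset by blast

lemma paths: "G \<in> \<Omega> \<Longrightarrow> Q (card G) G {} > 0 \<and> Q (card G) {} G > 0"
proof (induction "card G" arbitrary: G)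
  case 0
  then have "G = {}" using finite_G by auto
  then show ?case by simp
next
  case (Suc m)
  have G: "G \<in> \<Omega>" by fact
  have fin: "finite G" using finite_G[OF G] .
  then have ne: "G \<noteq> {}" using Suc.hyps(2) by auto
  have GD: "G \<in> DAGs n" using G Omega_sub by blast
  obtain e where e: "e \<in> G" and pe: "piA (G - {e}) > 0" using A2[OF GD _ ne] Omega_D[OF G] by blast
  have eP: "e \<in> Pairs n" using e Omega_D[OF G] by blast
  have G': "G - {e} \<in> \<Omega>" using Omega_I[OF _ pe] Omega_D[OF G] by blast
  have cG: "card (G - {e}) = m" using Suc.hyps(2) e fin by simp
  have IH: "Q m (G - {e}) {} > 0 \<and> Q m {} (G - {e}) > 0" using Suc.hyps(1)[OF cG[symmetric] G'] cG by simp
  obtain i j where ee: "e = (i,j)" by (cases e)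
  have ji: "(j,i) \<notin> G" using acyc_asym[of G i j] Omega_D[OF G] e ee by blast
  have f1: "flip G e = G - {e}" using e ee by (simp add: flip_def)
  have f2: "flip (G - {e}) e = G" using e ee ji by (auto simp: flip_def)
  have s1: "Q 1 G (G - {e}) > 0" using step_pos[OF G eP] f1 G' by simp
  have s2: "Q 1 (G - {e}) G > 0" using step_pos[OF G' eP] f2 G by simp
  have "Q (1 + m) G {} > 0" using pos_comp[OF G' empty_Omega s1] IH by blast
  moreover have "Q (m + 1) {} G > 0" using pos_comp[OF G' G _ s2] IH by blast
  ultimately show ?case using Suc.hyps(2) by simp
qed

lemma loops: "L \<ge> 2 \<Longrightarrow> Q L {} {} > 0"
proof -
  have p: "(1,2) \<in> Pairs n" and p': "(2,1) \<in> Pairs n" using n2 by (auto simp: Pairs_def Nodes_def)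
  have E1: "{(1,2)} \<in> \<Omega>" using Omega_I[OF _ A1[OF p]] p by auto
  have E2: "{(2,1)} \<in> \<Omega>" using Omega_I[OF _ A1[OF p']] p' by auto
  have a: "Q 1 {} {(1,2)} > 0" using step_pos[OF empty_Omega p] E1 by (simp add: flip_def)
  have c: "Q 1 {(1,2)} {} > 0" using step_pos[OF E1 p] empty_Omega by (simp add: flip_def)
  have d: "Q 1 {(1,2)} {(2,1)} > 0" using step_pos[OF E1 p'] E2 by (simp add: flip_def)
  have e: "Q 1 {(2,1)} {} > 0" using step_pos[OF E2 p'] empty_Omega by (simp add: flip_def)
  have h2: "(1::nat) + 1 = 2" and h3: "(2::nat) + 1 = 3" by simp_all
  have two: "Q 2 {} {} > 0" using pos_comp[OF E1 empty_Omega a c] by (simp only: h2)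
  have t21: "Q 2 {} {(2,1)} > 0" using pos_comp[OF E1 E2 a d] by (simp only: h2)
  have three: "Q 3 {} {} > 0" using pos_comp[OF E2 empty_Omega t21 e] by (simp only: h3)
  show "L \<ge> 2 \<Longrightarrow> Q L {} {} > 0"
  proof (induction L rule: less_induct)
    case (less L)
    show ?case
    proof (cases "L \<le> 3")
      case True
      then have "L = 2 \<or> L = 3" using less.prems by auto
      then show ?thesis using two three by auto
    next
      case False
      then have "Q (L - 2) {} {} > 0" using less.IH[of "L - 2"] by auto
      then have "Q ((L - 2) + 2) {} {} > 0" using pos_comp[OF empty_Omega empty_Omega _ two] by blast
      moreover have "L - 2 + 2 = L" using False by simp
      ultimately show ?thesis by (simp only:)
    qed
  qed
qed

definition "TT = 2 * card (Pairs n) + 2"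

lemma all_pos: assumes G: "G \<in> \<Omega>" and H: "H \<in> \<Omega>" and m: "m \<ge> TT"
  shows "Q m G H > 0"
proof -
  have cG: "card G \<le> card (Pairs n)" and cH: "card H \<le> card (Pairs n)"
    using card_mono[OF finite_Pairs] Omega_D G H by auto
  define L where "L = m - card G - card H"
  have L2: "L \<ge> 2" using m cG cH unfolding L_def TT_def by linarith
  have "Q (card G + L) G {} > 0"
    using pos_comp[OF empty_Omega empty_Omega conjunct1[OF paths[OF G]] loops[OF L2]] .
  then have "Q ((card G + L) + card H) G H > 0"
    using pos_comp[OF empty_Omega H _ conjunct2[OF paths[OF H]]] by blast
  moreover have "card G + L + card H = m" using m cG cH unfolding L_def TT_def by linarith
  ultimately show ?thesis by simp
qed

lemma irred: "irreducible_chain n pr q"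
  unfolding irreducible_chain_def using all_pos by blast

lemma Gcd_consec: "(a::nat) \<in> S \<Longrightarrow> Suc a \<in> S \<Longrightarrow> Gcd S = 1"
proof -
  assume "a \<in> S" "Suc a \<in> S"
  then have d1: "Gcd S dvd a" and d2: "Gcd S dvd Suc a" by (simp_all add: Gcd_dvd)
  have "Gcd S dvd Suc a - a" by (rule dvd_diff_nat[OF d2 d1])
  then have "Gcd S dvd 1" by simp
  then show ?thesis by simp
qed

lemma aper: "aperiodic_chain n pr q"
  unfolding aperiodic_chain_def
proof
  fix G assume G: "G \<in> \<Omega>"
  let ?S = "{t. t > 0 \<and> Q t G G > 0}"
  have t1: "Q TT G G > 0" using all_pos[OF G G order_refl] .
  have t2: "Q (Suc TT) G G > 0" using all_pos[OF G G le_SucI[OF order_refl]] .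
  have tp: "TT > 0" by (simp add: TT_def)
  have tp': "Suc TT > 0" by simp
  have "TT \<in> ?S" by (simp only: mem_Collect_eq t1 tp simp_thms)
  moreover have "Suc TT \<in> ?S" by (simp only: mem_Collect_eq t2 tp' simp_thms)
  ultimately show "Gcd ?S = 1" by (rule Gcd_consec)
qed

end



lemma wsum_upper:
  fixes W f :: "'a \<Rightarrow> real"
  assumes S: "finite S" and y: "y \<in> S" and W: "\<And>K. K \<in> S \<Longrightarrow> W K \<ge> 0"
    and s1: "(\<Sum>K\<in>S. W K) = 1" and fB: "\<And>K. K \<in> S \<Longrightarrow> f K \<le> B"
  shows "(\<Sum>K\<in>S. W K * f K) \<le> W y * f y + (1 - W y) * B"
proof -
  have "(\<Sum>K\<in>S. W K * f K) = W y * f y + (\<Sum>K\<in>S - {y}. W K * f K)"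
    using sum.remove[OF S y] .
  also have "(\<Sum>K\<in>S - {y}. W K * f K) \<le> (\<Sum>K\<in>S - {y}. W K * B)"
    by (rule sum_mono) (use W fB in \<open>auto intro: mult_left_mono\<close>)
  also have "(\<Sum>K\<in>S - {y}. W K * B) = (\<Sum>K\<in>S - {y}. W K) * B" by (simp add: sum_distrib_right)
  also have "(\<Sum>K\<in>S - {y}. W K) = 1 - W y" using sum.remove[OF S y, of W] s1 by simp
  finally show ?thesis by simp
qed

lemma wsum_lower:
  fixes W f :: "'a \<Rightarrow> real"
  assumes S: "finite S" and y: "y \<in> S" and W: "\<And>K. K \<in> S \<Longrightarrow> W K \<ge> 0"
    and s1: "(\<Sum>K\<in>S. W K) = 1" and fB: "\<And>K. K \<in> S \<Longrightarrow> f K \<ge> A"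
  shows "(\<Sum>K\<in>S. W K * f K) \<ge> W y * f y + (1 - W y) * A"
proof -
  have "(\<Sum>K\<in>S. W K * (- f K)) \<le> W y * (- f y) + (1 - W y) * (- A)"
    by (rule wsum_upper[OF S y W s1]) (use fB in auto)
  then show ?thesis by (simp add: sum_negf)
qed

context dagchain begin

lemma stat_iter: "H \<in> \<Omega> \<Longrightarrow> (\<Sum>G\<in>\<Omega>. mu G * Q t G H) = mu H"
proof (induction t arbitrary: H)
  case 0 then show ?case using finite_Omega by (simp add: if_distrib sum.delta cong: if_cong)
next
  case (Suc t)
  have "(\<Sum>G\<in>\<Omega>. mu G * Q (Suc t) G H) = (\<Sum>G\<in>\<Omega>. \<Sum>K\<in>\<Omega>. mu G * Q t G K * P K H)"
    by (simp add: sum_distrib_left mult.assoc)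
  also have "\<dots> = (\<Sum>K\<in>\<Omega>. \<Sum>G\<in>\<Omega>. mu G * Q t G K * P K H)" by (rule sum.swap)
  also have "\<dots> = (\<Sum>K\<in>\<Omega>. (\<Sum>G\<in>\<Omega>. mu G * Q t G K) * P K H)" by (simp add: sum_distrib_right)
  also have "\<dots> = (\<Sum>K\<in>\<Omega>. mu K * P K H)" using Suc.IH by simp
  also have "\<dots> = mu H" using mu_stat[OF Suc.prems] .
  finally show ?case .
qed

definition "dd = min (Min ((\<lambda>(G,K). Q TT G K) ` (\<Omega> \<times> \<Omega>))) (1/2)"

lemma dd_pos: "dd > 0" and dd_le: "dd \<le> 1/2"
  and dd_W: "G \<in> \<Omega> \<Longrightarrow> K \<in> \<Omega> \<Longrightarrow> dd \<le> Q TT G K"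
proof -
  have fin: "finite ((\<lambda>(G,K). Q TT G K) ` (\<Omega> \<times> \<Omega>))" using finite_Omega by simp
  have ne: "(\<lambda>(G,K). Q TT G K) ` (\<Omega> \<times> \<Omega>) \<noteq> {}" using empty_Omega by blast
  have "Min ((\<lambda>(G,K). Q TT G K) ` (\<Omega> \<times> \<Omega>)) > 0"
    using fin ne all_pos by (auto simp: Min_gr_iff)
  then show "dd > 0" by (simp add: dd_def)
  show "dd \<le> 1/2" by (simp add: dd_def)
  assume "G \<in> \<Omega>" "K \<in> \<Omega>"
  then have "Min ((\<lambda>(G,K). Q TT G K) ` (\<Omega> \<times> \<Omega>)) \<le> Q TT G K"
    using fin by (intro Min_le) auto
  then show "dd \<le> Q TT G K" by (simp add: dd_def)
qed

definition "lo H t = Min ((\<lambda>G. Q t G H) ` \<Omega>)"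
definition "hi H t = Max ((\<lambda>G. Q t G H) ` \<Omega>)"

lemma lohi_bnd: "G \<in> \<Omega> \<Longrightarrow> lo H t \<le> Q t G H \<and> Q t G H \<le> hi H t"
  unfolding lo_def hi_def using finite_Omega by auto

lemma lo_in: "\<exists>G\<in>\<Omega>. Q t G H = lo H t"
proof -
  have "lo H t \<in> (\<lambda>G. Q t G H) ` \<Omega>" unfolding lo_def using finite_Omega empty_Omega
    by (intro Min_in) auto
  then show ?thesis by auto
qed

lemma hi_in: "\<exists>G\<in>\<Omega>. Q t G H = hi H t"
proof -
  have "hi H t \<in> (\<lambda>G. Q t G H) ` \<Omega>" unfolding hi_def using finite_Omega empty_Omega
    by (intro Max_in) auto
  then show ?thesis by auto
qed

lemma osc_step: assumes H: "H \<in> \<Omega>"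
  shows "hi H (TT + t) - lo H (TT + t) \<le> (1 - dd) * (hi H t - lo H t)"
proof -
  obtain y0 where y0: "y0 \<in> \<Omega>" "Q t y0 H = lo H t" using lo_in by blast
  obtain y1 where y1: "y1 \<in> \<Omega>" "Q t y1 H = hi H t" using hi_in by blast
  obtain G where G: "G \<in> \<Omega>" "Q (TT + t) G H = hi H (TT + t)" using hi_in by blast
  obtain G' where G': "G' \<in> \<Omega>" "Q (TT + t) G' H = lo H (TT + t)" using lo_in by blast
  have lh: "lo H t \<le> hi H t" using lohi_bnd[OF y0(1), of H t] by linarith
  have up: "Q (TT + t) X H \<le> hi H t - dd * (hi H t - lo H t)" if X: "X \<in> \<Omega>" for X
  proof -
    have "Q (TT + t) X H = (\<Sum>K\<in>\<Omega>. Q TT X K * Q t K H)" using CK[OF H] .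
    also have "\<dots> \<le> Q TT X y0 * Q t y0 H + (1 - Q TT X y0) * hi H t"
      by (rule wsum_upper[OF finite_Omega y0(1)]) (use Pn_nonneg Pn_rowsum[OF X] lohi_bnd in auto)
    also have "\<dots> = hi H t - Q TT X y0 * (hi H t - lo H t)" using y0 by (simp add: algebra_simps)
    also have "\<dots> \<le> hi H t - dd * (hi H t - lo H t)"
      using dd_W[OF X y0(1)] lh by (simp add: mult_right_mono)
    finally show ?thesis .
  qed
  have low: "Q (TT + t) X H \<ge> lo H t + dd * (hi H t - lo H t)" if X: "X \<in> \<Omega>" for X
  proof -
    have "Q (TT + t) X H = (\<Sum>K\<in>\<Omega>. Q TT X K * Q t K H)" using CK[OF H] .
    also have "\<dots> \<ge> Q TT X y1 * Q t y1 H + (1 - Q TT X y1) * lo H t"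
      by (rule wsum_lower[OF finite_Omega y1(1)]) (use Pn_nonneg Pn_rowsum[OF X] lohi_bnd in auto)
    moreover have "Q TT X y1 * Q t y1 H + (1 - Q TT X y1) * lo H t = lo H t + Q TT X y1 * (hi H t - lo H t)"
      using y1 by (simp add: algebra_simps)
    moreover have "lo H t + Q TT X y1 * (hi H t - lo H t) \<ge> lo H t + dd * (hi H t - lo H t)"
      using dd_W[OF X y1(1)] lh by (simp add: mult_right_mono)
    ultimately show ?thesis by linarith
  qed
  have "hi H (TT + t) - lo H (TT + t) \<le> (1 - 2 * dd) * (hi H t - lo H t)"
    using up[OF G(1)] low[OF G'(1)] G G' by (simp add: algebra_simps)
  also have "\<dots> \<le> (1 - dd) * (hi H t - lo H t)"
    using dd_pos lh by (simp add: mult_right_mono)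
  finally show ?thesis .
qed

lemma osc_pow: assumes H: "H \<in> \<Omega>" shows "hi H (k * TT + r) - lo H (k * TT + r) \<le> (1 - dd) ^ k"
proof (induction k)
  case 0
  obtain y0 where y0: "y0 \<in> \<Omega>" "Q r y0 H = lo H r" using lo_in by blast
  obtain y1 where y1: "y1 \<in> \<Omega>" "Q r y1 H = hi H r" using hi_in by blast
  have "Q r y0 H \<ge> 0" "Q r y1 H \<le> 1" using Pn_nonneg Pn_le1[OF y1(1) H] by auto
  then show ?case using y0 y1 by simp
next
  case (Suc k)
  have e: "Suc k * TT + r = TT + (k * TT + r)" by simp
  have "hi H (Suc k * TT + r) - lo H (Suc k * TT + r) \<le> (1 - dd) * (hi H (k * TT + r) - lo H (k * TT + r))"
    unfolding e by (rule osc_step[OF H])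
  also have "\<dots> \<le> (1 - dd) * (1 - dd) ^ k"
    using Suc.IH dd_le by (intro mult_left_mono) auto
  finally show ?case by simp
qed

lemma conv: assumes G0: "G0 \<in> \<Omega>" and H: "H \<in> \<Omega>"
  shows "(\<lambda>t. Q t G0 H) \<longlonglongrightarrow> mu H"
proof (rule LIMSEQ_I)
  fix r :: real assume r: "r > 0"
  obtain k where k: "(1 - dd) ^ k < r" using real_arch_pow_inv[OF r, of "1 - dd"] dd_pos by auto
  show "\<exists>no. \<forall>t\<ge>no. norm (Q t G0 H - mu H) < r"
  proof (intro exI allI impI)
    fix t assume t: "t \<ge> k * TT"
    have te: "t = k * TT + (t - k * TT)" using t by simp
    have osc: "hi H t - lo H t \<le> (1 - dd) ^ k" using osc_pow[OF H, of k "t - k * TT"] te by simp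
    have b1: "lo H t \<le> Q t G0 H \<and> Q t G0 H \<le> hi H t" using lohi_bnd[OF G0] .
    have "mu H = (\<Sum>G\<in>\<Omega>. mu G * Q t G H)" using stat_iter[OF H] by simp
    moreover have "(\<Sum>G\<in>\<Omega>. mu G * Q t G H) \<le> (\<Sum>G\<in>\<Omega>. mu G * hi H t)"
      using mu_dist lohi_bnd unfolding is_distribution_def by (intro sum_mono mult_left_mono) auto
    moreover have "(\<Sum>G\<in>\<Omega>. mu G * Q t G H) \<ge> (\<Sum>G\<in>\<Omega>. mu G * lo H t)"
      using mu_dist lohi_bnd unfolding is_distribution_def by (intro sum_mono mult_left_mono) auto
    moreover have s1: "(\<Sum>G\<in>\<Omega>. mu G) = 1" using mu_dist unfolding is_distribution_def by blast
    have sc: "(\<Sum>G\<in>\<Omega>. mu G * c) = c" for c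
    proof -
      have "(\<Sum>G\<in>\<Omega>. mu G * c) = (\<Sum>G\<in>\<Omega>. mu G) * c" by (rule sum_distrib_right[symmetric])
      then show ?thesis by (simp only: s1 mult_1)
    qed
    ultimately have "lo H t \<le> mu H \<and> mu H \<le> hi H t" by (simp only: sc)
    then show "norm (Q t G0 H - mu H) < r" using b1 osc k by auto
  qed
qed

end

theorem mainTheorem5:
  fixes n :: nat and pr :: "nat \<Rightarrow> nat set \<Rightarrow> real" and q :: "nat \<Rightarrow> nat \<Rightarrow> real"
  assumes n2: "n \<ge> 2"
    and pi_nonneg: "\<And>i S. i \<in> Nodes n \<Longrightarrow> S \<subseteq> Nodes n - {i} \<Longrightarrow> pr i S \<ge> 0"
    and q_distr: "(\<Sum>(i,j)\<in>Pairs n. q i j) = 1"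
    and A1: "\<And>i j. (i,j) \<in> Pairs n \<Longrightarrow> piG n pr {(i,j)} > 0"
    and A2: "\<And>A. A \<in> DAGs n \<Longrightarrow> piG n pr A > 0 \<Longrightarrow> A \<noteq> {} \<Longrightarrow>
               \<exists>e\<in>A. piG n pr (A - {e}) > 0"
    and A3: "\<And>i j. (i,j) \<in> Pairs n \<Longrightarrow> q i j > 0"
    and A4: "\<And>i j. (i,j) \<in> Pairs n \<Longrightarrow> q i j = q j i"
  shows "irreducible_chain n pr q
       \<and> aperiodic_chain n pr q
       \<and> stationary n pr q (\<lambda>G. piG n pr G / Zconst n pr)
       \<and> detailed_balance n pr q (\<lambda>G. piG n pr G / Zconst n pr)
       \<and> (\<forall>G0\<in>Omega n pr. \<forall>H\<in>Omega n pr.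
            (\<lambda>t. Pn n pr q t G0 H) \<longlonglongrightarrow> piG n pr H / Zconst n pr)"
proof -
  interpret dagchain n pr q using assms by unfold_locales
  show ?thesis using irred aper stat DB_mu conv by blast
qed

end
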